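(* For every integer $0\le i\le s-1$, $$\sigma_2\big((I\otimes A_H)\,G_i\,(I\otimes A_H)\big)\le\sigma_2(G)+2\sigma_2(H)+\sigma_2(H)^2.$$
   Context: $G$ is a $d_1$-regular undirected graph on $[n]$ with normalized adjacency matrix $A_G$ and a locally invertible rotation map $\mathrm{rot}_G:[n]\times[d_1]\to[n]\times[d_1]$ ($\mathrm{rot}_G(v,j)=(v',j')$ iff $v'$ is the $j$-th neighbour of $v$ and $v$ is the $j'$-th neighbour of $v'$, and $j'=\varphi(j)$ for a fixed bijection $\varphi$ of $[d_1]$). $H$ is a $d_2$-regular undirected graph on vertex set $[d_1]^s$ with normalized adjacency matrix $A_H$. $\mathrm{Rot}_i:[n]\times[d_1]^s\to[n]\times[d_1]^s$ sends $(v,(a_0,\dots,a_{s-1}))$ to $(v',(a_0,\dots,a_{i-1},a_i',a_{i+1},\dots,a_{s-1}))$ where $(v',a_i')=\mathrm{rot}_G(v,a_i)$, and $G_i$ is the permutation matrix realizing $\mathrm{Rot}_i$ on $\mathbb R^{V(G)}\otimes\mathbb R^{V(H)}$. $\sigma_2(X)$ is the second largest singular value of $X$; $\sigma_2(G)=\sigma_2(A_G)$, $\sigma_2(H)=\sigma_2(A_H)$. *)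

theory Defs
  imports "HOL-Analysis.Analysis" "HOL-Computational_Algebra.Polynomial"
begin

definition charpoly :: "real^'n^'n \<Rightarrow> real poly" where
  "charpoly M = det (\<chi> i j. (if i = j then [:0, 1:] else 0) - [:M $ i $ j:])"

definition singular_values :: "real^'n^'m \<Rightarrow> real list" where
  "singular_values X = map sqrt (rev (sorted_list_of_multiset (proots (charpoly (transpose X ** X)))))"

definition sigma2 :: "real^'n^'m \<Rightarrow> real" where
  "sigma2 X = (if length (singular_values X) < 2 then 0 else singular_values X ! 1)"

text \<open>Rotation map axioms for a d1-regular graph on vertex type 'v with edge labels 'l
  (d1 = CARD('l)); locally invertible with fixed bijection phi.\<close>
definition rotation_map :: "('v \<times> 'l \<Rightarrow> 'v \<times> 'l) \<Rightarrow> bool" where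
  "rotation_map rot \<longleftrightarrow> (\<forall>x. rot (rot x) = x)"

definition locally_invertible :: "('v \<times> 'l \<Rightarrow> 'v \<times> 'l) \<Rightarrow> bool" where
  "locally_invertible rot \<longleftrightarrow> (\<exists>\<phi>. bij \<phi> \<and> (\<forall>v j. snd (rot (v, j)) = \<phi> j))"

definition rot_adj :: "('v::finite \<times> 'l::finite \<Rightarrow> 'v \<times> 'l) \<Rightarrow> real^'v^'v" where
  "rot_adj rot = (\<chi> v v'. real (card {j. fst (rot (v, j)) = v'}) / real CARD('l))"

text \<open>A d-regular undirected (multi)graph on a finite vertex type, given by symmetric
  edge multiplicities (a loop at v is counted in m v v).\<close>
definition regular_graph :: "nat \<Rightarrow> ('a::finite \<Rightarrow> 'a \<Rightarrow> nat) \<Rightarrow> bool" where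
  "regular_graph d m \<longleftrightarrow> (\<forall>x y. m x y = m y x) \<and> (\<forall>x. (\<Sum>y\<in>UNIV. m x y) = d)"

definition norm_adj :: "nat \<Rightarrow> ('a::finite \<Rightarrow> 'a \<Rightarrow> nat) \<Rightarrow> real^'a^'a" where
  "norm_adj d m = (\<chi> x y. real (m x y) / real d)"

definition kron :: "real^'b^'a \<Rightarrow> real^'d^'c \<Rightarrow> real^('b \<times> 'd)^('a \<times> 'c)" where
  "kron A B = (\<chi> p q. A $ fst p $ fst q * B $ snd p $ snd q)"

text \<open>Rot_i on [n] x [d1]^s, coordinates of [d1]^s indexed by the finite type 's.\<close>
definition Rot :: "('v \<times> 'l \<Rightarrow> 'v \<times> 'l) \<Rightarrow> 's::finite \<Rightarrow> 'v \<times> ('l^'s) \<Rightarrow> 'v \<times> ('l^'s)" where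
  "Rot rot i = (\<lambda>(v, a). let (v', a') = rot (v, a $ i) in (v', (\<chi> k. if k = i then a' else a $ k)))"

definition perm_mat :: "('a::finite \<Rightarrow> 'a) \<Rightarrow> real^'a^'a" where
  "perm_mat f = (\<chi> x y. if x = f y then 1 else 0)"

end

theory Submission
  imports Defs
begin


lemma sym_inner: 
  fixes S :: "real^'n^'n"
  assumes "transpose S = S"
  shows "x \<bullet> (S *v y) = (S *v x) \<bullet> y"
proof -
  have "x \<bullet> (S *v y) = (x v* S) \<bullet> y" by (simp add: dot_lmul_matrix)
  also have "x v* S = S *v x" by (metis assms vector_transpose_matrix)
  finally show ?thesis .
qed

lemma quad_lin_zero:
  fixes b C :: real
  assumes "\<And>t. 2 * t * b \<le> t^2 * C"
  shows "b = 0"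
proof (rule ccontr)
  assume nz: "b \<noteq> 0"
  define a where "a = \<bar>C\<bar> + 1"
  have pos: "a > 0" by (simp add: a_def)
  define t where "t = b / a"
  have "2 * t * b \<le> t^2 * C" by (rule assms)
  also have "\<dots> \<le> t^2 * a" unfolding a_def
    by (intro mult_left_mono) auto
  finally have "2 * t * b \<le> t^2 * a" .
  hence "2 * b * b / a \<le> b * b / a" using pos by (simp add: t_def power2_eq_square field_simps)
  hence "2 * b * b \<le> b * b" using pos by (simp add: divide_right_mono_neg field_simps)
  moreover have "b * b > 0" using nz by (metis linorder_neqE_linordered_idom mult_neg_neg mult_pos_pos)
  ultimately show False by simp
qed

lemma sym_eigen_exists:
  fixes S :: "real^'n^'n"
  assumes sym: "transpose S = S"
    and sub: "subspace W" and nz: "W \<noteq> {0}" and inv: "\<And>x. x \<in> W \<Longrightarrow> S *v x \<in> W"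
  shows "\<exists>x\<in>W. norm x = 1 \<and> S *v x = (x \<bullet> (S *v x)) *\<^sub>R x"
proof -
  let ?K = "W \<inter> sphere 0 1"
  have cK: "compact ?K"
    using sub by (simp add: closed_subspace closed_Int_compact compact_sphere)
  obtain w where w: "w \<in> W" "w \<noteq> 0" using nz sub subspace_0 by blast
  hence "w /\<^sub>R norm w \<in> ?K" using sub by (simp add: subspace_scale)
  hence neK: "?K \<noteq> {}" by blast
  have cont: "continuous_on ?K (\<lambda>x. x \<bullet> (S *v x))"
    by (intro continuous_intros)
  obtain x where x: "x \<in> ?K" and xmax: "\<And>y. y \<in> ?K \<Longrightarrow> y \<bullet> (S *v y) \<le> x \<bullet> (S *v x)"
    using continuous_attains_sup[OF cK neK cont] by auto
  define l where "l = x \<bullet> (S *v x)"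
  have xW: "x \<in> W" and nx: "norm x = 1" using x by auto
  have xx: "x \<bullet> x = 1" using nx by (simp add: norm_eq_1)
  have orth: "y \<bullet> (S *v x) = 0" if yW: "y \<in> W" and yx: "y \<bullet> x = 0" for y
  proof -
    have "2 * t * (y \<bullet> (S *v x)) \<le> t^2 * (l * (y \<bullet> y) - y \<bullet> (S *v y))" for t
    proof -
      define v where "v = x + t *\<^sub>R y"
      have vW: "v \<in> W" using xW yW sub by (simp add: v_def subspace_add subspace_scale)
      have vv: "v \<bullet> v = 1 + t^2 * (y \<bullet> y)"
        using xx yx by (simp add: v_def inner_add_left inner_add_right inner_commute power2_eq_square)
      have vpos: "v \<bullet> v > 0" using vv by (smt (verit) inner_ge_zero mult_nonneg_nonneg zero_le_power2)
      hence nv: "norm v > 0" by (simp add: norm_eq_sqrt_inner)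
      have "v /\<^sub>R norm v \<in> ?K" using vW sub nv by (simp add: subspace_scale)
      hence "(v /\<^sub>R norm v) \<bullet> (S *v (v /\<^sub>R norm v)) \<le> l" using xmax l_def by blast
      hence "(v \<bullet> (S *v v)) / (norm v)^2 \<le> l"
        by (simp add: matrix_vector_mult_scaleR power2_eq_square divide_inverse mult_ac)
      hence "v \<bullet> (S *v v) \<le> l * (v \<bullet> v)"
        using nv by (simp add: divide_le_eq power2_norm_eq_inner mult.commute)
      moreover have "v \<bullet> (S *v v) = l + 2 * t * (y \<bullet> (S *v x)) + t^2 * (y \<bullet> (S *v y))"
        using sym_inner[OF sym, of x y] 
        by (simp add: v_def l_def matrix_vector_mult_add_rdistrib matrix_vector_mult_scaleR
              inner_add_left inner_add_right power2_eq_square algebra_simps inner_commute)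
      ultimately show ?thesis using vv by (simp add: algebra_simps power2_eq_square)
    qed
    thus ?thesis by (rule quad_lin_zero)
  qed
  define z where "z = S *v x - l *\<^sub>R x"
  have zW: "z \<in> W" using inv[OF xW] xW sub by (simp add: z_def subspace_diff subspace_scale)
  have "z \<bullet> x = (S *v x) \<bullet> x - l * (x \<bullet> x)" by (simp add: z_def inner_diff_left)
  hence zx: "z \<bullet> x = 0" using xx by (simp add: l_def inner_commute)
  have "z \<bullet> z = z \<bullet> (S *v x) - l * (z \<bullet> x)" by (simp add: z_def inner_diff_right)
  also have "\<dots> = 0" using orth[OF zW zx] zx by simp
  finally have "z = 0" by simp
  thus ?thesis using xW nx by (auto simp: z_def l_def)
qed



lemma eigen_family:
  fixes S :: "real^'n^'n"
  assumes sym: "transpose S = S"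
  shows "m \<le> CARD('n) \<Longrightarrow> \<exists>f::nat \<Rightarrow> real^'n. \<exists>d::nat \<Rightarrow> real.
     (\<forall>k<m. \<forall>l<m. f k \<bullet> f l = (if k = l then 1 else 0)) \<and> (\<forall>k<m. S *v f k = d k *\<^sub>R f k)"
proof (induction m)
  case 0 show ?case by auto
next
  case (Suc m)
  then obtain f d where orth: "\<forall>k<m. \<forall>l<m. f k \<bullet> f l = (if k = l then 1 else 0)"
    and eig: "\<forall>k<m. S *v f k = d k *\<^sub>R f k" by auto
  define W where "W = {x. \<forall>k<m. f k \<bullet> x = 0}"
  have sub: "subspace W" by (auto simp: W_def subspace_def inner_add_right)
  have "dim (f ` {..<m}) \<le> card (f ` {..<m})" by (rule dim_le_card') simp
  also have "\<dots> \<le> m" using card_image_le[of "{..<m}" f] by simp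
  also have "\<dots> < DIM(real^'n)" using Suc.prems by simp
  finally obtain x where x0: "x \<noteq> 0" and xo: "\<And>y. y \<in> span (f ` {..<m}) \<Longrightarrow> orthogonal x y"
    using orthogonal_to_subspace_exists by blast
  have "x \<in> W" unfolding W_def
  proof (intro CollectI allI impI)
    fix k assume "k < m"
    hence "orthogonal x (f k)" by (intro xo span_base) auto
    thus "f k \<bullet> x = 0" by (simp add: orthogonal_def inner_commute)
  qed
  hence nz: "W \<noteq> {0}" using x0 by auto
  have inv: "S *v x \<in> W" if "x \<in> W" for x
    unfolding W_def
  proof (intro CollectI allI impI)
    fix k assume k: "k < m"
    have "f k \<bullet> (S *v x) = (S *v f k) \<bullet> x" by (rule sym_inner[OF sym])
    also have "\<dots> = d k * (f k \<bullet> x)" using eig k by simp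
    also have "\<dots> = 0" using that k by (simp add: W_def)
    finally show "f k \<bullet> (S *v x) = 0" .
  qed
  obtain e where eW: "e \<in> W" and ne: "norm e = 1" and ee: "S *v e = (e \<bullet> (S *v e)) *\<^sub>R e"
    using sym_eigen_exists[OF sym sub nz inv] by blast
  have e1: "e \<bullet> e = 1" using ne by (simp add: norm_eq_1)
  have fe: "f k \<bullet> e = 0" "e \<bullet> f k = 0" if "k < m" for k
    using eW that by (auto simp: W_def inner_commute)
  show ?case
  proof (intro exI conjI allI impI)
    fix k l assume k: "k < Suc m" and l: "l < Suc m"
    show "(f(m := e)) k \<bullet> (f(m := e)) l = (if k = l then 1 else 0)"
      using k l orth fe e1 by (cases "k = m"; cases "l = m") auto
  next
    fix k assume k: "k < Suc m"
    show "S *v (f(m := e)) k = (d(m := e \<bullet> (S *v e))) k *\<^sub>R (f(m := e)) k"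
      using k eig ee by (cases "k = m") auto
  qed
qed

lemma spectral_basis:
  fixes S :: "real^'n^'n"
  assumes sym: "transpose S = S"
  obtains q :: "'n \<Rightarrow> real^'n" and d :: "'n \<Rightarrow> real"
  where "\<And>k l. q k \<bullet> q l = (if k = l then 1 else 0)" "\<And>k. S *v q k = d k *\<^sub>R q k"
proof -
  obtain f :: "nat \<Rightarrow> real^'n" and d where
    orth: "\<forall>k<CARD('n). \<forall>l<CARD('n). f k \<bullet> f l = (if k = l then 1 else 0)"
    and eig: "\<forall>k<CARD('n). S *v f k = d k *\<^sub>R f k"
    using eigen_family[OF sym, of "CARD('n)"] by auto
  obtain h :: "'n \<Rightarrow> nat" where h: "bij_betw h UNIV {0..<CARD('n)}"
    using ex_bij_betw_finite_nat[of "UNIV :: 'n set"] by auto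
  have hr: "h k < CARD('n)" for k using h by (auto simp: bij_betw_def)
  have hi: "h k = h l \<longleftrightarrow> k = l" for k l using h by (auto simp: bij_betw_def inj_on_def)
  show ?thesis
    by (rule that[of "\<lambda>k. f (h k)" "\<lambda>k. d (h k)"]) (use orth eig hr hi in auto)
qed

lemma spectral_basis_ex:
  fixes S :: "real^'n^'n"
  assumes sym: "transpose S = S"
  shows "\<exists>(q::'n \<Rightarrow> real^'n) d. (\<forall>k l. q k \<bullet> q l = (if k = l then 1 else (0::real))) \<and> (\<forall>k. S *v q k = d k *\<^sub>R q k)"
proof -
  obtain q :: "'n \<Rightarrow> real^'n" and d where "\<And>k l. q k \<bullet> q l = (if k = l then 1 else 0)" "\<And>k. S *v q k = d k *\<^sub>R q k"
    using spectral_basis[OF sym] by blast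
  thus ?thesis by blast
qed



lemma poly_det: "poly (det A) t = det (\<chi> i j. poly (A $ i $ j) t)"
  unfolding det_def by (simp add: poly_sum poly_prod)

lemma colmat_mult:
  fixes q :: "'n::finite \<Rightarrow> real^'m::finite"
  shows "(\<chi> i k. q k $ i) *v z = (\<Sum>k\<in>UNIV. (z $ k) *\<^sub>R q k)"
  by (simp add: vec_eq_iff matrix_vector_mult_def sum_component mult.commute)

lemma colmat_transpose_mult:
  fixes q :: "'n::finite \<Rightarrow> real^'m::finite"
  shows "transpose (\<chi> i k. q k $ i) *v y = (\<chi> k. q k \<bullet> y)"
  by (simp add: vec_eq_iff matrix_vector_mult_def transpose_def inner_vec_def)

lemma matrix_eq_vec: fixes A B :: "real^'n^'m" shows "(\<And>x. A *v x = B *v x) \<Longrightarrow> A = B"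
  by (metis matrix_eq)

lemma mat_vec: "mat t *v y = t *\<^sub>R (y::real^'n)"
  apply (simp add: vec_eq_iff matrix_vector_mult_def mat_def)
  apply (simp add: if_distrib if_distribR cong del: if_weak_cong)
  done

lemma diag_sum: fixes g v :: "'n::finite \<Rightarrow> real" shows "(\<Sum>j\<in>UNIV. (if i = j then g j else 0) * v j) = g i * v i"
proof -
  have "(\<Sum>j\<in>UNIV. (if i = j then g j else 0) * v j) = (\<Sum>j\<in>UNIV. if i = j then g j * v j else 0)"
    by (rule sum.cong) auto
  thus ?thesis by (simp add: sum.delta')
qed

locale onb =
  fixes q :: "'n::finite \<Rightarrow> real^'n"
  assumes orth: "\<And>k l. q k \<bullet> q l = (if k = l then 1 else 0)"
begin

definition "Q = (\<chi> i k. q k $ i)"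

lemma QtQ: "transpose Q ** Q = mat 1"
  by (simp add: vec_eq_iff matrix_matrix_mult_def Q_def transpose_def mat_def orth[symmetric] inner_vec_def)

lemma QQt: "Q ** transpose Q = mat 1"
  using QtQ matrix_left_right_inverse by blast

lemma expand: "y = (\<Sum>k\<in>UNIV. (q k \<bullet> y) *\<^sub>R q k)"
proof -
  have "y = (Q ** transpose Q) *v y" by (simp add: QQt)
  also have "\<dots> = Q *v (transpose Q *v y)" by (simp only: matrix_vector_mul_assoc)
  also have "\<dots> = (\<Sum>k\<in>UNIV. (q k \<bullet> y) *\<^sub>R q k)"
    unfolding Q_def colmat_transpose_mult colmat_mult by simp
  finally show ?thesis .
qed

lemma inner_expand: "x \<bullet> y = (\<Sum>k\<in>UNIV. (q k \<bullet> x) * (q k \<bullet> y))"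
proof -
  have "x \<bullet> y = x \<bullet> (\<Sum>k\<in>UNIV. (q k \<bullet> y) *\<^sub>R q k)" using expand by metis
  also have "\<dots> = (\<Sum>k\<in>UNIV. (q k \<bullet> x) * (q k \<bullet> y))"
    by (simp add: inner_sum_right inner_commute mult.commute)
  finally show ?thesis .
qed

lemma diag_action:
  "(Q ** (\<chi> i j. if i = j then g i else 0) ** transpose Q) *v y = (\<Sum>k\<in>UNIV. (g k * (q k \<bullet> y)) *\<^sub>R q k)"
proof -
  have "(Q ** (\<chi> i j. if i = j then g i else 0) ** transpose Q) *v y
      = Q *v ((\<chi> i j. if i = j then g i else 0) *v (transpose Q *v y))"
    by (simp only: matrix_vector_mul_assoc matrix_mul_assoc)
  also have "(\<chi> i j. if i = j then g i else 0) *v (transpose Q *v y) = (\<chi> k. g k * (q k \<bullet> y))"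
    unfolding Q_def colmat_transpose_mult
    by (simp add: vec_eq_iff matrix_vector_mult_def diag_sum)
  finally show ?thesis unfolding Q_def colmat_mult by simp
qed

end

locale eigen_onb = onb q for q :: "'n::finite \<Rightarrow> real^'n" +
  fixes S :: "real^'n^'n" and d :: "'n \<Rightarrow> real"
  assumes eig: "\<And>k. S *v q k = d k *\<^sub>R q k"
begin

lemma S_action: "S *v y = (\<Sum>k\<in>UNIV. (d k * (q k \<bullet> y)) *\<^sub>R q k)"
proof -
  have "S *v y = S *v (\<Sum>k\<in>UNIV. (q k \<bullet> y) *\<^sub>R q k)" using expand by metis
  also have "\<dots> = (\<Sum>k\<in>UNIV. (q k \<bullet> y) *\<^sub>R (S *v q k))"
    by (simp add: linear_sum[OF matrix_vector_mul_linear] matrix_vector_mult_scaleR o_def)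
  also have "\<dots> = (\<Sum>k\<in>UNIV. (d k * (q k \<bullet> y)) *\<^sub>R q k)"
    by (simp add: eig mult.commute)
  finally show ?thesis .
qed

lemma quad: "y \<bullet> (S *v y) = (\<Sum>k\<in>UNIV. d k * (q k \<bullet> y)^2)"
  by (simp add: S_action inner_sum_right inner_commute power2_eq_square mult_ac)

lemma charpoly_eq: "charpoly S = (\<Prod>k\<in>UNIV. [:- d k, 1:])"
proof -
  have "poly (charpoly S) t = poly (\<Prod>k\<in>UNIV. [:- d k, 1:]) t" for t
  proof -
    define Dt where "Dt = (\<chi> i j. if i = j then t - d i else (0::real))"
    have "poly (charpoly S) t = det (mat t - S)"
      unfolding charpoly_def poly_det by (intro arg_cong[where f=det]) (simp add: vec_eq_iff mat_def)
    also have "mat t - S = Q ** Dt ** transpose Q"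
    proof (rule matrix_eq_vec)
      fix y
      have "(Q ** Dt ** transpose Q) *v y = (\<Sum>k\<in>UNIV. ((t - d k) * (q k \<bullet> y)) *\<^sub>R q k)"
        unfolding Dt_def by (rule diag_action)
      also have "\<dots> = t *\<^sub>R (\<Sum>k\<in>UNIV. (q k \<bullet> y) *\<^sub>R q k) - (\<Sum>k\<in>UNIV. (d k * (q k \<bullet> y)) *\<^sub>R q k)"
      proof -
        have "(\<Sum>k\<in>UNIV. ((t - d k) * (q k \<bullet> y)) *\<^sub>R q k) = (\<Sum>k\<in>UNIV. t *\<^sub>R ((q k \<bullet> y) *\<^sub>R q k) - (d k * (q k \<bullet> y)) *\<^sub>R q k)"
          by (rule sum.cong) (auto simp: scaleR_diff_left left_diff_distrib)
        also have "\<dots> = t *\<^sub>R (\<Sum>k\<in>UNIV. (q k \<bullet> y) *\<^sub>R q k) - (\<Sum>k\<in>UNIV. (d k * (q k \<bullet> y)) *\<^sub>R q k)"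
          by (simp only: sum_subtractf scaleR_sum_right)
        finally show ?thesis .
      qed
      also have "\<dots> = t *\<^sub>R y - S *v y" using expand[of y, symmetric] S_action[of y, symmetric] by simp
      also have "\<dots> = (mat t - S) *v y"
        by (simp add: matrix_vector_mult_diff_rdistrib mat_vec)
      finally show "(mat t - S) *v y = (Q ** Dt ** transpose Q) *v y" by simp
    qed
    also have "det (Q ** Dt ** transpose Q) = det Q * det Dt * det (transpose Q)"
      by (simp add: det_mul)
    also have "\<dots> = det Dt * det (Q ** transpose Q)" by (simp add: det_mul)
    also have "\<dots> = (\<Prod>k\<in>UNIV. t - d k)"
      by (simp add: QQt det_I, subst det_diagonal) (auto simp: Dt_def)
    also have "\<dots> = poly (\<Prod>k\<in>UNIV. [:- d k, 1:]) t" by (simp add: poly_prod)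
    finally show ?thesis .
  qed
  hence "poly (charpoly S) = poly (\<Prod>k\<in>UNIV. [:- d k, 1:])" by (intro ext)
  thus ?thesis by (simp only: poly_eq_poly_eq_iff)
qed

lemma proots_eq: "proots (charpoly S) = (\<Sum>k\<in>UNIV. {#d k#})"
  unfolding charpoly_eq by (subst proots_prod) auto

end



lemma sum_single_mset: "(\<Sum>k\<in>A. {#f k#}) = image_mset f (mset_set A)"
  by (induction A rule: infinite_finite_induct) auto

lemma len_L:
  fixes d :: "'n::finite \<Rightarrow> real"
  shows "length (rev (sorted_list_of_multiset (\<Sum>k\<in>UNIV. {#d k#}))) = CARD('n)"
proof -
  have "length (rev (sorted_list_of_multiset (\<Sum>k\<in>UNIV. {#d k#}))) = size (\<Sum>k\<in>(UNIV::'n set). {#d k#})"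
    by (simp flip: size_mset)
  also have "\<dots> = CARD('n)" by (simp add: sum_single_mset)
  finally show ?thesis .
qed

lemma top2:
  fixes d :: "'n::finite \<Rightarrow> real"
  assumes card: "CARD('n) \<ge> 2"
  defines "L \<equiv> rev (sorted_list_of_multiset (\<Sum>k\<in>UNIV. {#d k#}))"
  shows "\<exists>k1 k2. k1 \<noteq> k2 \<and> L!1 \<le> d k1 \<and> d k2 = L!1 \<and> (\<forall>k. k \<noteq> k1 \<longrightarrow> d k \<le> L!1)"
proof -
  define M where "M = image_mset d (mset_set (UNIV::'n set))"
  have mL: "mset L = M" by (simp add: L_def M_def sum_single_mset)
  have srt: "sorted (rev L)" by (simp add: L_def)
  have len: "length L = CARD('n)" unfolding L_def by (rule len_L)
  obtain a L1 where LL1: "L = a # L1" using len card by (cases L) auto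
  obtain b rest where L1: "L1 = b # rest" using len card LL1 by (cases L1) auto
  have Lab: "L = a # b # rest" using LL1 L1 by simp
  have "a \<in> set L" using Lab by simp
  hence "a \<in># M" using mL by (metis set_mset_mset)
  then obtain k1 where k1: "d k1 = a" by (auto simp: M_def)
  define M' where "M' = image_mset d (mset_set (UNIV - {k1}))"
  have "mset_set (UNIV::'n set) = add_mset k1 (mset_set (UNIV - {k1}))"
    by (simp add: mset_set.remove)
  hence "M = add_mset a M'" by (simp add: M_def M'_def k1)
  hence mr: "mset (b # rest) = M'" using mL Lab by simp
  have "b \<in> set (b # rest)" by simp
  hence "b \<in># M'" using mr by (metis set_mset_mset)
  then obtain k2 where k2: "k2 \<noteq> k1" "d k2 = b" by (auto simp: M'_def)
  have s2: "sorted (rev rest @ [b, a])" using srt Lab by simp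
  hence ba: "b \<le> a" and rb: "\<And>x. x \<in> set rest \<Longrightarrow> x \<le> b"
    by (auto simp: sorted_append)
  have other: "d k \<le> b" if "k \<noteq> k1" for k
  proof -
    have "d k \<in># M'" using that by (auto simp: M'_def)
    hence "d k \<in> set (b # rest)" using mr by (metis set_mset_mset)
    thus ?thesis using rb by auto
  qed
  have L1b: "L!1 = b" using Lab by simp
  show ?thesis
  proof (intro exI conjI allI impI)
    show "k1 \<noteq> k2" using k2 by metis
    show "L!1 \<le> d k1" unfolding L1b k1 by (rule ba)
    show "d k2 = L!1" unfolding L1b by (rule k2(2))
    fix k assume "k \<noteq> k1" thus "d k \<le> L!1" unfolding L1b by (rule other)
  qed
qed

lemma normsq_X: fixes X :: "real^'n^'m"
  shows "(X *v y) \<bullet> (X *v y) = y \<bullet> ((transpose X ** X) *v y)"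
proof -
  have 0: "(X *v y) \<bullet> (X *v y) = ((X *v y) v* X) \<bullet> y" by (simp add: dot_lmul_matrix)
  have 1: "(X *v y) v* X = transpose X *v (X *v y)" by simp
  have 2: "transpose X *v (X *v y) = (transpose X ** X) *v y" by (simp only: matrix_vector_mul_assoc)
  have "(X *v y) \<bullet> (X *v y) = ((transpose X ** X) *v y) \<bullet> y" by (simp only: 0 1 2)
  thus ?thesis by (simp only: inner_commute)
qed

lemma sv_data:
  fixes X :: "real^'n^'m"
  obtains q :: "'n \<Rightarrow> real^'n" and d where "eigen_onb q (transpose X ** X) d"
    and "singular_values X = map sqrt (rev (sorted_list_of_multiset (\<Sum>k\<in>UNIV. {#d k#})))"
proof -
  have sym: "transpose (transpose X ** X) = transpose X ** X"
    by (simp add: matrix_transpose_mul)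
  obtain q :: "'n \<Rightarrow> real^'n" and d where o: "\<And>k l. q k \<bullet> q l = (if k = l then 1 else 0)"
    and e: "\<And>k. (transpose X ** X) *v q k = d k *\<^sub>R q k"
    using spectral_basis_ex[OF sym] by blast
  interpret eigen_onb q "transpose X ** X" d
    by unfold_locales (fact o, fact e)
  show ?thesis
  proof (rule that[of q d])
    show "eigen_onb q (transpose X ** X) d" by (rule eigen_onb_axioms)
    show "singular_values X = map sqrt (rev (sorted_list_of_multiset (\<Sum>k\<in>UNIV. {#d k#})))"
      unfolding singular_values_def proots_eq by (rule refl)
  qed
qed

lemma sigma2_eq:
  fixes X :: "real^'n^'m" and d :: "'n \<Rightarrow> real"
  assumes "singular_values X = map sqrt (rev (sorted_list_of_multiset (\<Sum>k\<in>UNIV. {#d k#})))"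
  shows "sigma2 X = (if CARD('n) < 2 then 0 else sqrt (rev (sorted_list_of_multiset (\<Sum>k\<in>UNIV. {#d k#})) ! 1))"
  using len_L[of d] assms by (simp add: sigma2_def)

lemma (in eigen_onb) eig_val: "d k = q k \<bullet> (S *v q k)"
  using orth[of k k] by (simp add: eig)

lemma sigma2_nonneg:
  fixes X :: "real^'n^'m"
  shows "sigma2 X \<ge> 0"
proof -
  obtain q d where E: "eigen_onb q (transpose X ** X) d"
    and sv: "singular_values X = map sqrt (rev (sorted_list_of_multiset (\<Sum>k\<in>UNIV. {#d k#})))"
    by (rule sv_data)
  interpret eigen_onb q "transpose X ** X" d by (rule E)
  show ?thesis
  proof (cases "CARD('n) < 2")
    case True thus ?thesis by (simp add: sigma2_eq[OF sv])
  next
    case False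
    then obtain k1 k2 where "d k2 = rev (sorted_list_of_multiset (\<Sum>k\<in>UNIV. {#d k#})) ! 1"
      using top2[of d] by auto
    moreover have "d k2 = (X *v q k2) \<bullet> (X *v q k2)" by (simp only: eig_val[of k2] normsq_X[of X "q k2"])
    hence "d k2 \<ge> 0" by simp
    ultimately show ?thesis using False by (simp add: sigma2_eq[OF sv])
  qed
qed



lemma sigma2_upper:
  fixes X :: "real^'n^'m"
  assumes c: "c \<ge> 0" and H: "\<And>x. x \<bullet> u = 0 \<Longrightarrow> norm (X *v x) \<le> c * norm x"
  shows "sigma2 X \<le> c"
proof -
  obtain q :: "'n \<Rightarrow> real^'n" and d where E: "eigen_onb q (transpose X ** X) d"
    and sv: "singular_values X = map sqrt (rev (sorted_list_of_multiset (\<Sum>k\<in>UNIV. {#d k#})))"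
    by (rule sv_data)
  interpret eigen_onb q "transpose X ** X" d by (rule E)
  define L where "L = rev (sorted_list_of_multiset (\<Sum>k\<in>UNIV. {#d k#}))"
  show ?thesis
  proof (cases "CARD('n) < 2")
    case True thus ?thesis using c by (simp add: sigma2_eq[OF sv])
  next
    case False
    then obtain k1 k2 where k12: "k1 \<noteq> k2" "L!1 \<le> d k1" "d k2 = L!1"
      using top2[of d] unfolding L_def by auto
    define a where "a = (if q k2 \<bullet> u = 0 \<and> q k1 \<bullet> u = 0 then 1 else q k2 \<bullet> u)"
    define b where "b = (if q k2 \<bullet> u = 0 \<and> q k1 \<bullet> u = 0 then 0 else - (q k1 \<bullet> u))"
    define x where "x = a *\<^sub>R q k1 + b *\<^sub>R q k2"
    have xu: "x \<bullet> u = 0"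
      unfolding x_def a_def b_def by (auto simp: inner_add_left)
    have ab: "a^2 + b^2 > 0"
      unfolding a_def b_def by (auto simp: sum_power2_gt_zero_iff)
    have o11: "q k1 \<bullet> q k1 = 1" "q k2 \<bullet> q k2 = 1" "q k1 \<bullet> q k2 = 0" "q k2 \<bullet> q k1 = 0"
      using orth k12(1) by auto
    have xx: "x \<bullet> x = a^2 + b^2"
      unfolding x_def by (simp add: inner_add_left inner_add_right o11 power2_eq_square)
    have Sx: "(transpose X ** X) *v x = (a * d k1) *\<^sub>R q k1 + (b * d k2) *\<^sub>R q k2"
      unfolding x_def by (simp only: matrix_vector_right_distrib matrix_vector_mult_scaleR eig scaleR_scaleR)
    have xSx: "x \<bullet> ((transpose X ** X) *v x) = d k1 * a^2 + d k2 * b^2"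
      unfolding Sx by (simp add: x_def inner_add_left inner_add_right o11 power2_eq_square)
    have "norm (X *v x) \<le> c * norm x" by (rule H[OF xu])
    hence "(norm (X *v x))^2 \<le> (c * norm x)^2" by (simp add: power_mono)
    hence "(X *v x) \<bullet> (X *v x) \<le> c^2 * (x \<bullet> x)"
      by (simp add: power2_norm_eq_inner power_mult_distrib)
    hence le: "d k1 * a^2 + d k2 * b^2 \<le> c^2 * (a^2 + b^2)"
      using normsq_X[of X x] xSx xx by simp
    have "L!1 * (a^2 + b^2) \<le> d k1 * a^2 + d k2 * b^2"
      using k12 by (simp add: algebra_simps mult_right_mono)
    hence "L!1 * (a^2 + b^2) \<le> c^2 * (a^2 + b^2)" using le by linarith
    hence "L!1 \<le> c^2" using ab by simp
    hence "sqrt (L!1) \<le> sqrt (c^2)" by (rule real_sqrt_le_mono)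
    hence "sqrt (L!1) \<le> c" using c by simp
    thus ?thesis using False by (simp add: sigma2_eq[OF sv] L_def)
  qed
qed

lemma card_lt2_vec:
  fixes x1 x2 :: "real^'n"
  assumes "CARD('n) < 2" "x1 \<bullet> x2 = 0" "x1 \<noteq> 0" "x2 \<noteq> 0"
  shows False
proof -
  have "0 < CARD('n)" by simp
  hence "CARD('n) = 1" using assms(1) by linarith
  then obtain i :: 'n where U: "UNIV = {i}" using card_1_singletonE by blast
  have "x1 \<bullet> x2 = x1 $ i * x2 $ i" by (simp add: inner_vec_def U)
  hence "x1 $ i = 0 \<or> x2 $ i = 0" using assms(2) by simp
  moreover have "\<And>x :: real^'n. x $ i = 0 \<Longrightarrow> x = 0"
    by (simp add: vec_eq_iff) (metis UNIV_I U singletonD)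
  ultimately show False using assms(3,4) by blast
qed

lemma sigma2_lower:
  fixes X :: "real^'n^'m"
  assumes o12: "x1 \<bullet> x2 = 0" and n1: "x1 \<noteq> 0" and n2: "x2 \<noteq> 0" and c: "c \<ge> 0"
    and H: "\<And>a b. c * norm (a *\<^sub>R x1 + b *\<^sub>R x2) \<le> norm (X *v (a *\<^sub>R x1 + b *\<^sub>R x2))"
  shows "c \<le> sigma2 X"
proof -
  obtain q :: "'n \<Rightarrow> real^'n" and d where E: "eigen_onb q (transpose X ** X) d"
    and sv: "singular_values X = map sqrt (rev (sorted_list_of_multiset (\<Sum>k\<in>UNIV. {#d k#})))"
    by (rule sv_data)
  interpret eigen_onb q "transpose X ** X" d by (rule E)
  define L where "L = rev (sorted_list_of_multiset (\<Sum>k\<in>UNIV. {#d k#}))"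
  have card: "\<not> CARD('n) < 2" using card_lt2_vec[OF _ o12 n1 n2] by blast
  then obtain k1 where k1: "\<And>k. k \<noteq> k1 \<Longrightarrow> d k \<le> L!1"
    using top2[of d] unfolding L_def by auto
  define a where "a = (if x2 \<bullet> q k1 = 0 \<and> x1 \<bullet> q k1 = 0 then 1 else x2 \<bullet> q k1)"
  define b where "b = (if x2 \<bullet> q k1 = 0 \<and> x1 \<bullet> q k1 = 0 then 0 else - (x1 \<bullet> q k1))"
  define y where "y = a *\<^sub>R x1 + b *\<^sub>R x2"
  have qy: "q k1 \<bullet> y = 0"
    unfolding y_def a_def b_def by (auto simp: inner_add_right inner_commute)
  have ab: "a^2 + b^2 > 0"
    unfolding a_def b_def by (auto simp: sum_power2_gt_zero_iff)
  have p1: "x1 \<bullet> x1 > 0" "x2 \<bullet> x2 > 0" using n1 n2 by auto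
  have yy: "y \<bullet> y = a^2 * (x1 \<bullet> x1) + b^2 * (x2 \<bullet> x2)"
    using o12 unfolding y_def
    by (simp add: inner_add_left inner_add_right inner_commute[of x2 x1] power2_eq_square algebra_simps)
  have ypos: "y \<bullet> y > 0"
  proof -
    have "a^2 * (x1 \<bullet> x1) \<ge> 0" "b^2 * (x2 \<bullet> x2) \<ge> 0" using p1 by auto
    moreover have "a \<noteq> 0 \<or> b \<noteq> 0" using ab by auto
    hence "a^2 * (x1 \<bullet> x1) > 0 \<or> b^2 * (x2 \<bullet> x2) > 0" using p1 by auto
    ultimately show ?thesis unfolding yy by linarith
  qed
  have "y \<bullet> ((transpose X ** X) *v y) = (\<Sum>k\<in>UNIV. d k * (q k \<bullet> y)^2)" by (rule quad)
  also have "\<dots> \<le> (\<Sum>k\<in>UNIV. L!1 * (q k \<bullet> y)^2)"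
  proof (rule sum_mono)
    fix k :: 'n
    show "d k * (q k \<bullet> y)^2 \<le> L!1 * (q k \<bullet> y)^2"
    proof (cases "k = k1")
      case True thus ?thesis using qy by simp
    next
      case False thus ?thesis using k1[OF False] by (simp add: mult_right_mono)
    qed
  qed
  also have "\<dots> = L!1 * (y \<bullet> y)"
    by (simp add: inner_expand[of y y] sum_distrib_left power2_eq_square)
  finally have up: "(X *v y) \<bullet> (X *v y) \<le> L!1 * (y \<bullet> y)" using normsq_X[of X y] by simp
  have "c * norm y \<le> norm (X *v y)" unfolding y_def by (rule H)
  hence "(c * norm y)^2 \<le> (norm (X *v y))^2" using c by (simp add: power_mono)
  hence "c^2 * (y \<bullet> y) \<le> (X *v y) \<bullet> (X *v y)" by (simp add: power2_norm_eq_inner power_mult_distrib)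
  hence "c^2 * (y \<bullet> y) \<le> L!1 * (y \<bullet> y)" using up by linarith
  hence "c^2 \<le> L!1" using ypos by simp
  hence "sqrt (c^2) \<le> sqrt (L!1)" by (rule real_sqrt_le_mono)
  hence "c \<le> sqrt (L!1)" using c by simp
  thus ?thesis using card by (simp add: sigma2_eq[OF sv] L_def)
qed



lemma norm_le_from_sq:
  fixes x :: "'a::real_inner" and y :: "'b::real_inner"
  assumes "0 \<le> c" "c^2 * (x \<bullet> x) \<le> y \<bullet> y"
  shows "c * norm x \<le> norm y"
proof -
  have "c * norm x = sqrt (c^2 * (x \<bullet> x))"
    using assms(1) by (simp add: real_sqrt_mult norm_eq_sqrt_inner)
  also have "\<dots> \<le> sqrt (y \<bullet> y)" using assms(2) by (rule real_sqrt_le_mono)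
  finally show ?thesis by (simp add: norm_eq_sqrt_inner)
qed

lemma norm_le_from_sq':
  fixes x :: "'a::real_inner" and y :: "'b::real_inner"
  assumes "0 \<le> c" "y \<bullet> y \<le> c^2 * (x \<bullet> x)"
  shows "norm y \<le> c * norm x"
proof -
  have "norm y = sqrt (y \<bullet> y)" by (simp add: norm_eq_sqrt_inner)
  also have "\<dots> \<le> sqrt (c^2 * (x \<bullet> x))" using assms(2) by (rule real_sqrt_le_mono)
  also have "\<dots> = c * norm x"
    using assms(1) by (simp add: real_sqrt_mult norm_eq_sqrt_inner)
  finally show ?thesis .
qed

lemma jensen_sq:
  fixes w z :: "'a::finite \<Rightarrow> real"
  assumes w0: "\<And>j. w j \<ge> 0" and w1: "(\<Sum>j\<in>UNIV. w j) = 1"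
  shows "(\<Sum>j\<in>UNIV. w j * z j)^2 \<le> (\<Sum>j\<in>UNIV. w j * (z j)^2)"
proof -
  define m where "m = (\<Sum>j\<in>UNIV. w j * z j)"
  have "0 \<le> (\<Sum>j\<in>UNIV. w j * (z j - m)^2)"
    using w0 by (intro sum_nonneg) simp
  also have "(\<Sum>j\<in>UNIV. w j * (z j - m)^2) = (\<Sum>j\<in>UNIV. w j * (z j)^2 - 2 * m * (w j * z j) + m^2 * w j)"
    by (rule sum.cong) (simp_all add: power2_eq_square algebra_simps)
  also have "\<dots> = (\<Sum>j\<in>UNIV. w j * (z j)^2) - 2 * m * m + m^2 * 1"
    by (simp add: sum.distrib sum_subtractf sum_distrib_left[symmetric] m_def w1)
  finally show ?thesis by (simp add: m_def power2_eq_square)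
qed

definition ds :: "real^'a^'a \<Rightarrow> bool" where
  "ds A \<longleftrightarrow> (\<forall>i j. A$i$j \<ge> 0) \<and> (\<forall>i. (\<Sum>j\<in>UNIV. A$i$j) = 1) \<and> (\<forall>j. (\<Sum>i\<in>UNIV. A$i$j) = 1)"

lemma inner_vec_sq: "x \<bullet> (x::real^'n) = (\<Sum>i\<in>UNIV. (x$i)^2)"
  by (simp add: inner_vec_def power2_eq_square)

lemma ds_contract:
  fixes A :: "real^'a::finite^'a"
  assumes "ds A"
  shows "(A *v z) \<bullet> (A *v z) \<le> z \<bullet> z"
proof -
  have "(A *v z) \<bullet> (A *v z) = (\<Sum>i\<in>UNIV. (\<Sum>j\<in>UNIV. A$i$j * z$j)^2)"
    by (simp add: inner_vec_sq matrix_vector_mult_def)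
  also have "\<dots> \<le> (\<Sum>i\<in>UNIV. (\<Sum>j\<in>UNIV. A$i$j * (z$j)^2))"
    using assms unfolding ds_def by (intro sum_mono jensen_sq) auto
  also have "\<dots> = (\<Sum>j\<in>UNIV. (\<Sum>i\<in>UNIV. A$i$j) * (z$j)^2)"
    by (subst sum.swap) (simp add: sum_distrib_right)
  also have "\<dots> = z \<bullet> z" using assms by (simp add: ds_def inner_vec_sq)
  finally show ?thesis .
qed

lemma ds_one: "ds A \<Longrightarrow> A *v 1 = (1 :: real^'a::finite)"
  by (simp add: ds_def vec_eq_iff matrix_vector_mult_def)

lemma inner_one: "(1::real^'a::finite) \<bullet> z = (\<Sum>i\<in>UNIV. z$i)"
  by (simp add: inner_vec_def)

lemma ds_oneT:
  fixes A :: "real^'a::finite^'a"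
  assumes "ds A" shows "1 \<bullet> (A *v z) = 1 \<bullet> z"
proof -
  have "1 \<bullet> (A *v z) = (\<Sum>i\<in>UNIV. \<Sum>j\<in>UNIV. A$i$j * z$j)"
    by (simp add: inner_one matrix_vector_mult_def)
  also have "\<dots> = (\<Sum>j\<in>UNIV. (\<Sum>i\<in>UNIV. A$i$j) * z$j)"
    by (subst sum.swap) (simp add: sum_distrib_right)
  also have "\<dots> = 1 \<bullet> z" using assms by (simp add: ds_def inner_one)
  finally show ?thesis .
qed

lemma ds_sigma2:
  fixes A :: "real^'a::finite^'a"
  assumes ds: "ds A" and z1: "z \<bullet> 1 = 0"
  shows "norm (A *v z) \<le> sigma2 A * norm z"
proof (cases "z = 0")
  case True thus ?thesis by simp
next
  case False
  define c where "c = norm (A *v z) / norm z"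
  have nz: "norm z > 0" using False by simp
  have c0: "c \<ge> 0" by (simp add: c_def)
  have cz: "norm (A *v z) = c * norm z" using nz by (simp add: c_def)
  have c1: "c \<le> 1"
  proof -
    have "norm (A *v z) \<le> norm z"
      using ds_contract[OF ds, of z] by (simp add: norm_le)
    thus ?thesis using nz by (simp add: c_def)
  qed
  have one0: "(1::real^'a) \<noteq> 0" by (simp add: vec_eq_iff)
  have "c \<le> sigma2 A"
  proof (rule sigma2_lower[OF _ one0 False c0])
    show "1 \<bullet> z = 0" using z1 by (simp add: inner_commute)
    fix a b :: real
    have Az1: "1 \<bullet> (A *v z) = 0" using ds_oneT[OF ds, of z] z1 by (simp add: inner_commute)
    have lhs: "(a *\<^sub>R 1 + b *\<^sub>R z) \<bullet> (a *\<^sub>R 1 + b *\<^sub>R z) = a^2 * (1 \<bullet> (1::real^'a)) + b^2 * (z \<bullet> z)"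
      using z1 by (simp add: inner_add_left inner_add_right inner_commute power2_eq_square algebra_simps)
    have Aeq: "A *v (a *\<^sub>R 1 + b *\<^sub>R z) = a *\<^sub>R 1 + b *\<^sub>R (A *v z)"
      by (simp add: matrix_vector_right_distrib matrix_vector_mult_scaleR ds_one[OF ds])
    have rhs: "(A *v (a *\<^sub>R 1 + b *\<^sub>R z)) \<bullet> (A *v (a *\<^sub>R 1 + b *\<^sub>R z)) = a^2 * (1 \<bullet> (1::real^'a)) + b^2 * ((A *v z) \<bullet> (A *v z))"
      unfolding Aeq using Az1 by (simp add: inner_add_left inner_add_right inner_commute power2_eq_square algebra_simps)
    have Azz: "(A *v z) \<bullet> (A *v z) = c^2 * (z \<bullet> z)"
      using cz by (simp add: power2_norm_eq_inner[symmetric] power_mult_distrib)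
    have c2: "c^2 \<le> 1" using c0 c1 by (simp add: power_le_one)
    have "c^2 * (a^2 * (1 \<bullet> (1::real^'a))) \<le> a^2 * (1 \<bullet> (1::real^'a))"
      using c2 by (simp add: mult_left_le_one_le)
    hence "c^2 * ((a *\<^sub>R 1 + b *\<^sub>R z) \<bullet> (a *\<^sub>R 1 + b *\<^sub>R z)) \<le> (A *v (a *\<^sub>R 1 + b *\<^sub>R z)) \<bullet> (A *v (a *\<^sub>R 1 + b *\<^sub>R z))"
      unfolding lhs rhs Azz by (simp add: algebra_simps)
    thus "c * norm (a *\<^sub>R 1 + b *\<^sub>R z) \<le> norm (A *v (a *\<^sub>R 1 + b *\<^sub>R z))"
      by (rule norm_le_from_sq[OF c0])
  qed
  thus ?thesis using cz nz by (simp add: mult_right_mono)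
qed



definition blk :: "real^('v::finite \<times> 'b::finite) \<Rightarrow> 'v \<Rightarrow> real^'b" where
  "blk x v = (\<chi> b. x $ (v, b))"

lemma sum_pair: "(\<Sum>q\<in>UNIV. f q) = (\<Sum>w\<in>UNIV. \<Sum>b\<in>UNIV. f (w, b))"
proof -
  have "(\<Sum>w\<in>UNIV. \<Sum>b\<in>UNIV. f (w, b)) = (\<Sum>q\<in>UNIV \<times> UNIV. f q)"
    by (simp add: sum.cartesian_product)
  thus ?thesis by (simp add: UNIV_Times_UNIV)
qed

lemma kron_apply:
  fixes B :: "real^'b::finite^'b"
  shows "(kron (mat 1 :: real^'v::finite^'v) B *v x) $ (v, a) = (B *v blk x v) $ a"
proof -
  have "(kron (mat 1 :: real^'v^'v) B *v x) $ (v, a) =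
        (\<Sum>w\<in>UNIV. \<Sum>b\<in>UNIV. (if v = w then 1 else 0) * B $ a $ b * x $ (w, b))"
    by (simp add: kron_def matrix_vector_mult_def mat_def sum_pair[where f = "\<lambda>q. _ q * x $ q"])
  also have "\<dots> = (\<Sum>w\<in>UNIV. if v = w then (\<Sum>b\<in>UNIV. B $ a $ b * x $ (w, b)) else 0)"
    by (rule sum.cong) auto
  also have "\<dots> = (B *v blk x v) $ a" by (simp add: matrix_vector_mult_def blk_def)
  finally show ?thesis .
qed

lemma blk_kron: "blk (kron (mat 1 :: real^'v::finite^'v) (B :: real^'b::finite^'b) *v x) v = B *v blk x v"
  by (simp add: vec_eq_iff kron_apply) (simp add: blk_def kron_apply)

lemma inner_blk:
  fixes x y :: "real^('v::finite \<times> 'b::finite)"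
  shows "x \<bullet> y = (\<Sum>v\<in>UNIV. blk x v \<bullet> blk y v)"
  by (simp add: inner_vec_def blk_def sum_pair[where f = "\<lambda>q. x $ q * y $ q"])

lemma kron_bound:
  fixes B :: "real^'b::finite^'b"
  assumes "\<And>y. (B *v y) \<bullet> (B *v y) \<le> c2 * (y \<bullet> y)"
  shows "(kron (mat 1 :: real^'v::finite^'v) B *v x) \<bullet> (kron (mat 1 :: real^'v^'v) B *v x) \<le> c2 * (x \<bullet> x)"
proof -
  have "(kron (mat 1 :: real^'v^'v) B *v x) \<bullet> (kron (mat 1 :: real^'v^'v) B *v x)
      = (\<Sum>v\<in>UNIV. (B *v blk x v) \<bullet> (B *v blk x v))"
    by (simp add: inner_blk[where 'v='v] blk_kron)
  also have "\<dots> \<le> (\<Sum>v\<in>UNIV. c2 * (blk x v \<bullet> blk x v))"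
    by (intro sum_mono assms)
  also have "\<dots> = c2 * (x \<bullet> x)" by (simp add: inner_blk[where 'v='v] sum_distrib_left)
  finally show ?thesis .
qed

lemma kron_add: "kron A (B + C) = kron A B + kron A C"
  by (simp add: vec_eq_iff kron_def algebra_simps)

definition JH :: "real^'b::finite^'b" where "JH = (\<chi> a b. 1 / real CARD('b))"

lemma JH_apply: "JH *v w = (\<Sum>b\<in>UNIV. w $ b / real CARD('b)) *\<^sub>R (1::real^'b::finite)"
  by (simp add: vec_eq_iff JH_def matrix_vector_mult_def)

lemma ds_JH: "ds (JH :: real^'b::finite^'b)"
  by (simp add: ds_def JH_def)

lemma JH_proj:
  fixes w :: "real^'b::finite"
  shows "(w - JH *v w) \<bullet> 1 = 0" and "(JH *v w) \<bullet> (JH *v w) \<le> w \<bullet> w"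
    and "(w - JH *v w) \<bullet> (w - JH *v w) \<le> w \<bullet> w"
proof -
  define m where "m = (\<Sum>b\<in>UNIV. w $ b / real CARD('b))"
  have u: "JH *v w = m *\<^sub>R 1" by (simp add: JH_apply m_def)
  have "(w - m *\<^sub>R 1) \<bullet> 1 = (\<Sum>b\<in>UNIV. w $ b) - m * real CARD('b)"
    by (simp add: inner_diff_left inner_commute[of w] inner_one)
  also have "\<dots> = 0" by (simp add: m_def sum_divide_distrib[symmetric])
  finally show o: "(w - JH *v w) \<bullet> 1 = 0" by (simp add: u)
  have o': "(w - JH *v w) \<bullet> (JH *v w) = 0" using o by (simp add: u)
  have "w \<bullet> w = (w - JH *v w) \<bullet> (w - JH *v w) + (JH *v w) \<bullet> (JH *v w) + 2 * ((w - JH *v w) \<bullet> (JH *v w))"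
    by (simp add: inner_diff_left inner_diff_right inner_commute algebra_simps)
  hence e: "w \<bullet> w = (w - JH *v w) \<bullet> (w - JH *v w) + (JH *v w) \<bullet> (JH *v w)" using o' by simp
  show "(JH *v w) \<bullet> (JH *v w) \<le> w \<bullet> w" using e inner_ge_zero[of "w - JH *v w"] by linarith
  show "(w - JH *v w) \<bullet> (w - JH *v w) \<le> w \<bullet> w" using e inner_ge_zero[of "JH *v w"] by linarith
qed

lemma ds_fix_const: "ds A \<Longrightarrow> A *v (m *\<^sub>R 1) = m *\<^sub>R (1::real^'b::finite)"
  by (simp add: matrix_vector_mult_scaleR ds_one)

lemma ds_E_bound:
  fixes A :: "real^'b::finite^'b"
  assumes ds: "ds A"
  shows "((A - JH) *v w) \<bullet> ((A - JH) *v w) \<le> (sigma2 A)^2 * (w \<bullet> w)"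
proof -
  have eq: "(A - JH) *v w = A *v (w - JH *v w)"
  proof -
    have "A *v (JH *v w) = JH *v w" unfolding JH_apply by (rule ds_fix_const[OF ds])
    thus ?thesis by (simp add: matrix_vector_mult_diff_rdistrib matrix_vector_mult_diff_distrib)
  qed
  have "norm (A *v (w - JH *v w)) \<le> sigma2 A * norm (w - JH *v w)"
    by (rule ds_sigma2[OF ds JH_proj(1)])
  also have "\<dots> \<le> sigma2 A * norm w"
  proof (rule mult_left_mono)
    show "norm (w - JH *v w) \<le> norm w" using JH_proj(3)[of w] by (simp add: norm_le)
  qed (rule sigma2_nonneg)
  finally have "norm ((A - JH) *v w) \<le> sigma2 A * norm w" unfolding eq .
  hence "(norm ((A - JH) *v w))^2 \<le> (sigma2 A * norm w)^2" by (simp add: power_mono)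
  thus ?thesis by (simp add: power2_norm_eq_inner power_mult_distrib)
qed



lemma regroup:
  fixes F :: "'b::finite \<Rightarrow> real" and g :: "'a::finite \<Rightarrow> 'b"
  shows "(\<Sum>x\<in>UNIV. F (g x)) = (\<Sum>y\<in>UNIV. real (card {x. g x = y}) * F y)"
proof -
  have "(\<Sum>x\<in>UNIV. F (g x)) = (\<Sum>y\<in>UNIV. \<Sum>x\<in>{x. x \<in> UNIV \<and> g x = y}. F (g x))"
    by (rule sum.group[symmetric]) auto
  also have "\<dots> = (\<Sum>y\<in>UNIV. real (card {x. g x = y}) * F y)"
  proof (rule sum.cong[OF refl])
    fix y
    have "(\<Sum>x\<in>{x. x \<in> UNIV \<and> g x = y}. F (g x)) = (\<Sum>x\<in>{x. g x = y}. F y)"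
      by (rule sum.cong) auto
    thus "(\<Sum>x\<in>{x. x \<in> UNIV \<and> g x = y}. F (g x)) = real (card {x. g x = y}) * F y" by simp
  qed
  finally show ?thesis .
qed

lemma perm_apply:
  assumes inv: "\<And>x. f (f x) = x"
  shows "perm_mat f *v y = (\<chi> x. y $ f x)"
proof -
  have "(perm_mat f *v y) $ x = y $ f x" for x
  proof -
    have "(perm_mat f *v y) $ x = (\<Sum>z\<in>UNIV. (if x = f z then 1 else 0) * y $ z)"
      by (simp add: perm_mat_def matrix_vector_mult_def)
    also have "\<dots> = (\<Sum>z\<in>UNIV. if f x = z then y $ z else 0)"
      by (rule sum.cong) (auto, metis inv, metis inv)
    also have "\<dots> = y $ f x" by simp
    finally show ?thesis .
  qed
  thus ?thesis by (simp add: vec_eq_iff)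
qed

lemma perm_norm:
  assumes inv: "\<And>x. f (f x) = x"
  shows "(perm_mat f *v y) \<bullet> (perm_mat f *v y) = y \<bullet> (y::real^'a::finite)"
proof -
  have inj: "inj f" by (metis inv injI)
  have surj: "f ` UNIV = UNIV" by (metis inv surjI)
  have "(perm_mat f *v y) \<bullet> (perm_mat f *v y) = (\<Sum>x\<in>UNIV. (y $ f x)^2)"
    by (simp add: perm_apply[OF inv] inner_vec_sq)
  also have "\<dots> = (\<Sum>x\<in>f ` UNIV. (y $ x)^2)" by (simp add: sum.reindex[OF inj] o_def)
  also have "\<dots> = y \<bullet> y" by (simp add: surj inner_vec_sq)
  finally show ?thesis .
qed

lemma Rot_fst: "fst (Rot rot i (v, a)) = fst (rot (v, a $ i))"
  by (simp add: Rot_def Let_def split: prod.splits)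

lemma Rot_inv:
  assumes "rotation_map rot"
  shows "Rot rot i (Rot rot i p) = p"
proof -
  obtain v a where p: "p = (v, a)" by (cases p)
  obtain v' j' where r: "rot (v, a $ i) = (v', j')" by (cases "rot (v, a $ i)")
  have r2: "rot (v', j') = (v, a $ i)" using assms r unfolding rotation_map_def by metis
  have "Rot rot i (v, a) = (v', \<chi> k. if k = i then j' else a $ k)"
    by (simp add: Rot_def r)
  moreover have "Rot rot i (v', \<chi> k. if k = i then j' else a $ k) = (v, a)"
    by (simp add: Rot_def r2 vec_eq_iff)
  ultimately show ?thesis by (simp add: p)
qed

lemma card_fiber_eq:
  fixes i :: "'s::finite"
  shows "card {b :: 'l::finite^'s. b $ i = j} = card {b :: 'l^'s. b $ i = j'}"
proof -
  have "bij_betw (\<lambda>b. \<chi> k. if k = i then j' else b $ k) {b :: 'l^'s. b $ i = j} {b. b $ i = j'}"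
    by (rule bij_betw_byWitness[where f' = "\<lambda>b. \<chi> k. if k = i then j else b $ k"])
       (auto simp: vec_eq_iff)
  thus ?thesis by (rule bij_betw_same_card)
qed

lemma coord_sum:
  fixes i :: "'s::finite" and F :: "'l::finite \<Rightarrow> real"
  shows "real CARD('l) * (\<Sum>b\<in>(UNIV :: ('l^'s) set). F (b $ i)) = real CARD('l^'s) * (\<Sum>j\<in>UNIV. F j)"
proof -
  obtain j0 :: 'l where True by blast
  define K where "K = card {b :: 'l^'s. b $ i = j0}"
  have fib: "card {b :: 'l^'s. b $ i = j} = K" for j by (simp add: K_def card_fiber_eq)
  have "(\<Sum>b\<in>(UNIV :: ('l^'s) set). F (b $ i)) = (\<Sum>j\<in>UNIV. real K * F j)"
    using regroup[of F "\<lambda>b :: 'l^'s. b $ i"] by (simp add: fib)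
  moreover have "real CARD('l^'s) = (\<Sum>j\<in>(UNIV :: 'l set). real K)"
    using regroup[of "\<lambda>_. (1::real)" "\<lambda>b :: 'l^'s. b $ i"] by (simp add: fib)
  ultimately show ?thesis by (simp add: sum_distrib_left mult.assoc)
qed

lemma rot_card_le:
  assumes rm: "rotation_map rot"
  shows "card {j. fst (rot (v, j)) = v'} \<le> card {j :: 'l::finite. fst (rot (v' :: 'v, j)) = v}"
proof (rule card_inj_on_le[where f = "\<lambda>j. snd (rot (v, j))"])
  have inv: "\<And>x. rot (rot x) = x" using rm unfolding rotation_map_def by blast
  show "inj_on (\<lambda>j. snd (rot (v, j))) {j. fst (rot (v, j)) = v'}"
  proof (rule inj_onI)
    fix j1 j2 assume "j1 \<in> {j. fst (rot (v, j)) = v'}" "j2 \<in> {j. fst (rot (v, j)) = v'}"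
      and e: "snd (rot (v, j1)) = snd (rot (v, j2))"
    hence "rot (v, j1) = rot (v, j2)" by (simp add: prod_eq_iff)
    hence "rot (rot (v, j1)) = rot (rot (v, j2))" by simp
    thus "j1 = j2" using inv by simp
  qed
  show "(\<lambda>j. snd (rot (v, j))) ` {j. fst (rot (v, j)) = v'} \<subseteq> {j. fst (rot (v', j)) = v}"
  proof
    fix y assume "y \<in> (\<lambda>j. snd (rot (v, j))) ` {j. fst (rot (v, j)) = v'}"
    then obtain j where j: "fst (rot (v, j)) = v'" "y = snd (rot (v, j))" by auto
    have "rot (v, j) = (v', y)" using j by (metis prod.collapse)
    hence "rot (v', y) = rot (rot (v, j))" by simp
    thus "y \<in> {j. fst (rot (v', j)) = v}" using inv by simp
  qed
qed simp

lemma rot_card_sym: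
  assumes "rotation_map rot"
  shows "card {j. fst (rot (v, j)) = v'} = card {j :: 'l::finite. fst (rot (v' :: 'v, j)) = v}"
  using rot_card_le[OF assms, of v v'] rot_card_le[OF assms, of v' v] by simp

lemma rot_adj_apply:
  fixes rot :: "'v::finite \<times> 'l::finite \<Rightarrow> 'v \<times> 'l"
  shows "(rot_adj rot *v z) $ v = (\<Sum>j\<in>UNIV. z $ fst (rot (v, j))) / real CARD('l)"
proof -
  have "(rot_adj rot *v z) $ v = (\<Sum>v'\<in>UNIV. real (card {j. fst (rot (v, j)) = v'}) * z $ v') / real CARD('l)"
    by (simp add: rot_adj_def matrix_vector_mult_def sum_divide_distrib)
  also have "\<dots> = (\<Sum>j\<in>UNIV. z $ fst (rot (v, j))) / real CARD('l)"
    using regroup[of "\<lambda>v'. z $ v'" "\<lambda>j. fst (rot (v, j))"] by simp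
  finally show ?thesis .
qed

lemma ds_rot_adj:
  fixes rot :: "'v::finite \<times> 'l::finite \<Rightarrow> 'v \<times> 'l"
  assumes rm: "rotation_map rot"
  shows "ds (rot_adj rot)"
proof -
  have row: "(\<Sum>v'\<in>UNIV. real (card {j. fst (rot (v, j)) = v'})) = real CARD('l)" for v
    using regroup[of "\<lambda>_. (1::real)" "\<lambda>j. fst (rot (v, j))"] by simp
  have col: "(\<Sum>v\<in>UNIV. real (card {j. fst (rot (v, j)) = v'})) = real CARD('l)" for v'
    using row[of v'] by (simp add: rot_card_sym[OF rm])
  show ?thesis
    unfolding ds_def rot_adj_def
    by (simp add: sum_divide_distrib[symmetric] row col)
qed

lemma ds_norm_adj:
  fixes mH :: "'a::finite \<Rightarrow> 'a \<Rightarrow> nat"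
  assumes rg: "regular_graph d2 mH" and d: "d2 > 0"
  shows "ds (norm_adj d2 mH)"
proof -
  have sym: "mH x y = mH y x" for x y using rg unfolding regular_graph_def by blast
  have rs: "(\<Sum>y\<in>UNIV. mH x y) = d2" for x using rg unfolding regular_graph_def by blast
  have row: "(\<Sum>y\<in>UNIV. real (mH x y)) = real d2" for x
    using rs[of x] by (simp flip: of_nat_sum)
  have col: "(\<Sum>x\<in>UNIV. real (mH x y)) = real d2" for y
  proof -
    have "(\<Sum>x\<in>UNIV. real (mH x y)) = (\<Sum>x\<in>UNIV. real (mH y x))"
      by (rule sum.cong) (simp_all add: sym[of _ y])
    thus ?thesis using row[of y] by simp
  qed
  show ?thesis
    unfolding ds_def norm_adj_def using d
    by (simp add: sum_divide_distrib[symmetric] row col)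
qed



definition lift :: "real^'v::finite \<Rightarrow> real^('v \<times> 'b::finite)" where
  "lift z = (\<chi> p. z $ fst p)"

lemma J_apply:
  fixes x :: "real^('v::finite \<times> 'b::finite)"
  shows "kron (mat 1 :: real^'v^'v) (JH :: real^'b^'b) *v x = lift (\<chi> v. (\<Sum>b\<in>UNIV. x $ (v, b)) / real CARD('b))"
proof -
  have "(kron (mat 1 :: real^'v^'v) (JH :: real^'b^'b) *v x) $ p = lift (\<chi> v. (\<Sum>b\<in>UNIV. x $ (v, b)) / real CARD('b)) $ p" for p
  proof -
    obtain v a where p: "p = (v, a)" by (cases p)
    show ?thesis unfolding p kron_apply
      by (simp add: JH_apply blk_def lift_def sum_divide_distrib)
  qed
  thus ?thesis by (simp add: vec_eq_iff)
qed

lemma lift_norm: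
  fixes z :: "real^'v::finite"
  shows "(lift z :: real^('v \<times> 'b::finite)) \<bullet> lift z = real CARD('b) * (z \<bullet> z)"
proof -
  have "(lift z :: real^('v \<times> 'b)) \<bullet> lift z = (\<Sum>v\<in>UNIV. \<Sum>b\<in>(UNIV::'b set). z $ v * z $ v)"
    by (simp add: inner_vec_def lift_def sum_pair[where f = "\<lambda>q. z $ fst q * z $ fst q"])
  also have "\<dots> = real CARD('b) * (z \<bullet> z)" by (simp add: inner_vec_def sum_distrib_left)
  finally show ?thesis .
qed

lemma lift_norm':
  fixes z :: "real^'v::finite"
  shows "norm (lift z :: real^('v \<times> 'b::finite)) = sqrt (real CARD('b)) * norm z"
  by (simp add: norm_eq_sqrt_inner lift_norm real_sqrt_mult)

lemma JPJ:
  fixes rot :: "'v::finite \<times> 'l::finite \<Rightarrow> 'v \<times> 'l" and i :: "'s::finite"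
  assumes rm: "rotation_map rot"
  shows "kron (mat 1 :: real^'v^'v) (JH :: real^('l^'s)^('l^'s)) *v (perm_mat (Rot rot i) *v lift z) = lift (rot_adj rot *v z)"
proof -
  have Pz: "perm_mat (Rot rot i) *v lift z = (\<chi> p. z $ fst (Rot rot i p))"
    by (simp add: perm_apply[OF Rot_inv[OF rm]] lift_def)
  have "(\<Sum>b\<in>(UNIV :: ('l^'s) set). (perm_mat (Rot rot i) *v lift z) $ (v, b)) / real CARD('l^'s) = (rot_adj rot *v z) $ v" for v
  proof -
    have "(\<Sum>b\<in>(UNIV :: ('l^'s) set). (perm_mat (Rot rot i) *v lift z) $ (v, b)) = (\<Sum>b\<in>(UNIV :: ('l^'s) set). z $ fst (rot (v, b $ i)))"
      by (simp add: Pz Rot_fst)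
    moreover have "real CARD('l) * (\<Sum>b\<in>(UNIV :: ('l^'s) set). z $ fst (rot (v, b $ i))) = real CARD('l^'s) * (\<Sum>j\<in>UNIV. z $ fst (rot (v, j)))"
      by (rule coord_sum)
    ultimately have "(\<Sum>b\<in>(UNIV :: ('l^'s) set). (perm_mat (Rot rot i) *v lift z) $ (v, b)) / real CARD('l^'s)
        = (\<Sum>j\<in>UNIV. z $ fst (rot (v, j))) / real CARD('l)"
      by (simp add: field_simps)
    thus ?thesis by (simp add: rot_adj_apply)
  qed
  thus ?thesis by (simp add: J_apply vec_eq_iff)
qed



theorem mainTheorem8:
  fixes rot :: "'v::finite \<times> 'l::finite \<Rightarrow> 'v \<times> 'l"
    and mH :: "'l^'s::finite \<Rightarrow> 'l^'s \<Rightarrow> nat"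
    and d2 :: nat
    and i :: 's
  assumes "rotation_map rot"
    and "locally_invertible rot"
    and "regular_graph d2 mH"
    and "d2 > 0"
  shows "sigma2 (kron (mat 1 :: real^'v^'v) (norm_adj d2 mH) ** perm_mat (Rot rot i)
                  ** kron (mat 1 :: real^'v^'v) (norm_adj d2 mH))
         \<le> sigma2 (rot_adj rot) + 2 * sigma2 (norm_adj d2 mH) + (sigma2 (norm_adj d2 mH))\<^sup>2"
proof -
  note rm = assms(1)
  define AH where "AH = norm_adj d2 mH"
  define AG where "AG = rot_adj rot"
  define N where "N = kron (mat 1 :: real^'v^'v) AH"
  define J where "J = kron (mat 1 :: real^'v^'v) (JH :: real^('l^'s)^('l^'s))"
  define E where "E = kron (mat 1 :: real^'v^'v) (AH - JH)"
  define P where "P = perm_mat (Rot rot i)"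
  define g where "g = sigma2 AG"
  define h where "h = sigma2 AH"
  have g0: "g \<ge> 0" unfolding g_def by (rule sigma2_nonneg)
  have h0: "h \<ge> 0" unfolding h_def by (rule sigma2_nonneg)
  have dsH: "ds AH" unfolding AH_def by (rule ds_norm_adj[OF assms(3,4)])
  have dsG: "ds AG" unfolding AG_def by (rule ds_rot_adj[OF rm])
  have NJE: "N = J + E"
    unfolding N_def J_def E_def by (simp flip: kron_add)
  have nN: "norm (N *v y) \<le> norm y" for y
  proof -
    have "(N *v y) \<bullet> (N *v y) \<le> 1 * (y \<bullet> y)"
      unfolding N_def by (rule kron_bound) (simp add: ds_contract[OF dsH])
    thus ?thesis by (simp add: norm_le)
  qed
  have nJ: "norm (J *v y) \<le> norm y" for y
  proof -
    have "(J *v y) \<bullet> (J *v y) \<le> 1 * (y \<bullet> y)"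
      unfolding J_def by (rule kron_bound) (simp add: ds_contract[OF ds_JH])
    thus ?thesis by (simp add: norm_le)
  qed
  have nE: "norm (E *v y) \<le> h * norm y" for y
  proof -
    have "(E *v y) \<bullet> (E *v y) \<le> h^2 * (y \<bullet> y)"
      unfolding E_def h_def by (rule kron_bound) (rule ds_E_bound[OF dsH])
    thus ?thesis using norm_le_from_sq'[OF h0] by blast
  qed
  have nP: "norm (P *v y) = norm y" for y
    unfolding P_def norm_eq_sqrt_inner by (simp add: perm_norm[OF Rot_inv[OF rm]])
  have main: "norm ((N ** P ** N) *v x) \<le> (g + 2 * h + h^2) * norm x" if x1: "x \<bullet> 1 = 0" for x
  proof -
    define zx where "zx = (\<chi> v. (\<Sum>b\<in>UNIV. x $ (v, b)) / real CARD('l^'s))"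
    have Jx: "J *v x = lift zx" unfolding J_def zx_def by (rule J_apply)
    have zx1: "zx \<bullet> 1 = 0"
    proof -
      have "zx \<bullet> 1 = (\<Sum>v\<in>UNIV. \<Sum>b\<in>UNIV. x $ (v, b)) / real CARD('l^'s)"
        by (simp add: zx_def inner_commute[of _ 1] inner_one sum_divide_distrib)
      also have "(\<Sum>v\<in>UNIV. \<Sum>b\<in>UNIV. x $ (v, b)) = x \<bullet> 1"
        by (simp add: inner_commute[of _ 1] inner_one sum_pair[where f = "\<lambda>q. x $ q"])
      finally show ?thesis using x1 by simp
    qed
    have "J *v (P *v (J *v x)) = J *v (P *v lift zx)" by (simp only: Jx)
    also have "\<dots> = lift (AG *v zx)" unfolding J_def P_def AG_def by (rule JPJ[OF rm])
    finally have JPJ': "J *v (P *v (J *v x)) = lift (AG *v zx)" .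
    have t1: "norm (J *v (P *v (J *v x))) \<le> g * norm x"
    proof -
      have "norm (J *v (P *v (J *v x))) = sqrt (real CARD('l^'s)) * norm (AG *v zx)"
        unfolding JPJ' by (rule lift_norm')
      also have "\<dots> \<le> sqrt (real CARD('l^'s)) * (g * norm zx)"
        unfolding g_def by (intro mult_left_mono ds_sigma2[OF dsG zx1]) simp
      also have "\<dots> = g * norm (J *v x)"
        unfolding Jx lift_norm' by simp
      also have "\<dots> \<le> g * norm x" using g0 nJ by (simp add: mult_left_mono)
      finally show ?thesis .
    qed
    have t2: "norm (E *v (P *v (J *v x))) \<le> h * norm x"
    proof -
      have "norm (E *v (P *v (J *v x))) \<le> h * norm (P *v (J *v x))" by (rule nE)
      also have "\<dots> = h * norm (J *v x)" by (simp add: nP)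
      also have "\<dots> \<le> h * norm x" using h0 nJ by (simp add: mult_left_mono)
      finally show ?thesis .
    qed
    have t3: "norm (N *v (P *v (E *v x))) \<le> h * norm x"
    proof -
      have "norm (N *v (P *v (E *v x))) \<le> norm (P *v (E *v x))" by (rule nN)
      also have "\<dots> = norm (E *v x)" by (simp add: nP)
      also have "\<dots> \<le> h * norm x" by (rule nE)
      finally show ?thesis .
    qed
    have "(N ** P ** N) *v x = N *v (P *v (N *v x))"
      by (simp only: matrix_vector_mul_assoc matrix_mul_assoc)
    also have "\<dots> = J *v (P *v (J *v x)) + E *v (P *v (J *v x)) + N *v (P *v (E *v x))"
    proof -
      have "N *v x = J *v x + E *v x" unfolding NJE by (rule matrix_vector_mult_add_rdistrib)
      hence "N *v (P *v (N *v x)) = N *v (P *v (J *v x)) + N *v (P *v (E *v x))"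
        by (simp only: matrix_vector_right_distrib)
      also have "N *v (P *v (J *v x)) = J *v (P *v (J *v x)) + E *v (P *v (J *v x))"
        unfolding NJE by (rule matrix_vector_mult_add_rdistrib)
      finally show ?thesis .
    qed
    finally have eq: "(N ** P ** N) *v x = J *v (P *v (J *v x)) + E *v (P *v (J *v x)) + N *v (P *v (E *v x))" .
    have "norm ((N ** P ** N) *v x) \<le> norm (J *v (P *v (J *v x))) + norm (E *v (P *v (J *v x))) + norm (N *v (P *v (E *v x)))"
      unfolding eq by (rule order_trans[OF norm_triangle_ineq add_right_mono[OF norm_triangle_ineq]])
    also have "\<dots> \<le> g * norm x + h * norm x + h * norm x" using t1 t2 t3 by linarith
    also have "\<dots> \<le> (g + 2 * h + h^2) * norm x"
      by (simp add: algebra_simps)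
    finally show ?thesis .
  qed
  have "sigma2 (N ** P ** N) \<le> g + 2 * h + h^2"
    by (rule sigma2_upper[where u = 1]) (use g0 h0 main in auto)
  thus ?thesis unfolding N_def P_def AH_def g_def h_def AG_def .
qed


end
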